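(* Let $G$ be a commutative group and $f_1,f_2$ bijections of $G$ such that $G(f_1)$, $G(f_2)$ are not groups. (i) If $f_1,f_2$ are conjugate in $\mathrm{Aut}(G)$ (i.e., $f_2=\psi f_1\psi^{-1}$ for some $\psi\in\mathrm{Aut}(G)$), then $G(f_1)\cong G(f_2)$. (ii) If $f_1(1)=1=f_2(1)$, then $G(f_1)\cong G(f_2)$ if and only if $f_1,f_2$ are conjugate in $\mathrm{Aut}(G)$. (iii) If $f_2\in\mathrm{Aut}(G)$, $t$ is a square in $G$, and $f_1(x)=f_2(x)t$ for every $x\in G$, then $G(f_1)\cong G(f_2)$.
   Context: Construction $G(f)$: for a commutative group $G$ (written multiplicatively) and a bijection $f:G\to G$, let $\overline{G}=\{\overline{x}:x\in G\}$ be a disjoint copy of $G$, and let $G(f)$ be the set $G\cup\overline{G}$ with multiplication $*$ defined for $x,y\in G$ by $x*y=xy$, $x*\overline{y}=\overline{xy}$, $\overline{x}*y=\overline{xy}$, $\overline{x}*\overline{y}=f(xy)$. It is a commutative loop with neutral element $1$. *)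

theory Defs
  imports "HOL-Algebra.Algebra"
begin

text \<open>The loop G(f): carrier is a disjoint union of two copies of carrier G;
  Inl x stands for x and Inr x stands for the barred copy of x.\<close>
definition Gf :: "('a, 'b) monoid_scheme \<Rightarrow> ('a \<Rightarrow> 'a) \<Rightarrow> ('a + 'a) monoid" where
  "Gf G f = \<lparr> carrier = Inl ` carrier G \<union> Inr ` carrier G,
     monoid.mult = (\<lambda>u v. case u of
               Inl x \<Rightarrow> (case v of Inl y \<Rightarrow> Inl (x \<otimes>\<^bsub>G\<^esub> y)
                                | Inr y \<Rightarrow> Inr (x \<otimes>\<^bsub>G\<^esub> y))
             | Inr x \<Rightarrow> (case v of Inl y \<Rightarrow> Inr (x \<otimes>\<^bsub>G\<^esub> y)
                                | Inr y \<Rightarrow> Inl (f (x \<otimes>\<^bsub>G\<^esub> y)))),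
     one = Inl \<one>\<^bsub>G\<^esub> \<rparr>"

definition conj_in_Aut :: "('a, 'b) monoid_scheme \<Rightarrow> ('a \<Rightarrow> 'a) \<Rightarrow> ('a \<Rightarrow> 'a) \<Rightarrow> bool" where
  "conj_in_Aut G f1 f2 \<longleftrightarrow>
     (\<exists>\<psi> \<in> iso G G. \<forall>x \<in> carrier G. f2 x = \<psi> (f1 (inv_into (carrier G) \<psi> x)))"

end

theory Submission
  imports Defs
begin


lemma Gf_carrier: "carrier (Gf G f) = Inl ` carrier G \<union> Inr ` carrier G"
  by (simp add: Gf_def)
lemma Gf_one: "\<one>\<^bsub>Gf G f\<^esub> = Inl \<one>\<^bsub>G\<^esub>" by (simp add: Gf_def)
lemma Gf_mult [simp]:
  "Inl x \<otimes>\<^bsub>Gf G f\<^esub> Inl y = Inl (x \<otimes>\<^bsub>G\<^esub> y)"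
  "Inl x \<otimes>\<^bsub>Gf G f\<^esub> Inr y = Inr (x \<otimes>\<^bsub>G\<^esub> y)"
  "Inr x \<otimes>\<^bsub>Gf G f\<^esub> Inl y = Inr (x \<otimes>\<^bsub>G\<^esub> y)"
  "Inr x \<otimes>\<^bsub>Gf G f\<^esub> Inr y = Inl (f (x \<otimes>\<^bsub>G\<^esub> y))"
  by (simp_all add: Gf_def)

lemma Gf_cases:
  assumes "u \<in> carrier (Gf G f)"
  obtains x where "x \<in> carrier G" "u = Inl x" | x where "x \<in> carrier G" "u = Inr x"
  using assms by (auto simp: Gf_carrier)

lemma Inl_in [simp]: "Inl x \<in> carrier (Gf G f) \<longleftrightarrow> x \<in> carrier G"
  and Inr_in [simp]: "Inr x \<in> carrier (Gf G f) \<longleftrightarrow> x \<in> carrier G"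
  by (auto simp: Gf_carrier)

context comm_group begin

lemma Gf_closed:
  assumes "f \<in> carrier G \<rightarrow> carrier G" "u \<in> carrier (Gf G f)" "v \<in> carrier (Gf G f)"
  shows "u \<otimes>\<^bsub>Gf G f\<^esub> v \<in> carrier (Gf G f)"
  using assms by (cases rule: Gf_cases[OF assms(2)]; cases rule: Gf_cases[OF assms(3)]) auto

lemma Gf_group_trans:
  assumes c: "c \<in> carrier G" and fc: "\<And>x. x \<in> carrier G \<Longrightarrow> f x = x \<otimes> c"
  shows "group (Gf G f)"
proof (rule groupI)
  have fC: "f \<in> carrier G \<rightarrow> carrier G" using fc c by auto
  show "\<And>x y. x \<in> carrier (Gf G f) \<Longrightarrow> y \<in> carrier (Gf G f) \<Longrightarrow> x \<otimes>\<^bsub>Gf G f\<^esub> y \<in> carrier (Gf G f)"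
    using Gf_closed[OF fC] by blast
  show "\<one>\<^bsub>Gf G f\<^esub> \<in> carrier (Gf G f)" by (simp add: Gf_one)
  show "(x \<otimes>\<^bsub>Gf G f\<^esub> y) \<otimes>\<^bsub>Gf G f\<^esub> z = x \<otimes>\<^bsub>Gf G f\<^esub> (y \<otimes>\<^bsub>Gf G f\<^esub> z)"
    if "x \<in> carrier (Gf G f)" "y \<in> carrier (Gf G f)" "z \<in> carrier (Gf G f)" for x y z
    using that c
    by (cases rule: Gf_cases[OF that(1)]; cases rule: Gf_cases[OF that(2)];
        cases rule: Gf_cases[OF that(3)]) (simp_all add: fc m_ac)
  show "\<one>\<^bsub>Gf G f\<^esub> \<otimes>\<^bsub>Gf G f\<^esub> x = x" if "x \<in> carrier (Gf G f)" for x
    using that by (cases rule: Gf_cases[OF that]) (auto simp: Gf_one)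
  show "\<exists>y\<in>carrier (Gf G f). y \<otimes>\<^bsub>Gf G f\<^esub> x = \<one>\<^bsub>Gf G f\<^esub>" if "x \<in> carrier (Gf G f)" for x
  proof (cases rule: Gf_cases[OF that])
    case (1 a)
    then show ?thesis by (intro bexI[of _ "Inl (inv a)"]) (auto simp: Gf_one)
  next
    case (2 a)
    have "f (inv a \<otimes> inv c \<otimes> a) = \<one>" using 2 c
      by (simp add: fc m_ac) (metis inv_closed m_assoc m_comm r_inv r_one one_closed)
    then show ?thesis using 2 c by (intro bexI[of _ "Inr (inv a \<otimes> inv c)"]) (auto simp: Gf_one)
  qed
qed


lemma Inl_mid:
  assumes "u \<in> carrier (Gf G f)" "x \<in> carrier G" "w \<in> carrier (Gf G f)"
  shows "(u \<otimes>\<^bsub>Gf G f\<^esub> Inl x) \<otimes>\<^bsub>Gf G f\<^esub> w = u \<otimes>\<^bsub>Gf G f\<^esub> (Inl x \<otimes>\<^bsub>Gf G f\<^esub> w)"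
  using assms
  by (cases rule: Gf_cases[OF assms(1)]; cases rule: Gf_cases[OF assms(3)]) (auto simp: m_assoc)

lemma Inr_not_mid:
  assumes ng: "\<not> group (Gf G f)" and y: "y \<in> carrier G" and fC: "f \<in> carrier G \<rightarrow> carrier G"
  shows "\<exists>u\<in>carrier (Gf G f). \<exists>w\<in>carrier (Gf G f).
     (u \<otimes>\<^bsub>Gf G f\<^esub> Inr y) \<otimes>\<^bsub>Gf G f\<^esub> w \<noteq> u \<otimes>\<^bsub>Gf G f\<^esub> (Inr y \<otimes>\<^bsub>Gf G f\<^esub> w)"
proof (rule ccontr)
  assume H: "\<not> ?thesis"
  have H': "\<forall>u\<in>carrier (Gf G f). \<forall>w\<in>carrier (Gf G f). (u \<otimes>\<^bsub>Gf G f\<^esub> Inr y) \<otimes>\<^bsub>Gf G f\<^esub> w = u \<otimes>\<^bsub>Gf G f\<^esub> (Inr y \<otimes>\<^bsub>Gf G f\<^esub> w)"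
    using H by blast
  have A: "\<And>x z. x \<in> carrier G \<Longrightarrow> z \<in> carrier G \<Longrightarrow> f (x \<otimes> y \<otimes> z) = x \<otimes> f (y \<otimes> z)"
  proof -
    fix x z assume xz: "x \<in> carrier G" "z \<in> carrier G"
    have "(Inl x \<otimes>\<^bsub>Gf G f\<^esub> Inr y) \<otimes>\<^bsub>Gf G f\<^esub> Inr z = Inl x \<otimes>\<^bsub>Gf G f\<^esub> (Inr y \<otimes>\<^bsub>Gf G f\<^esub> Inr z)"
      using H'[rule_format, of "Inl x" "Inr z"] xz y by simp
    then show "f (x \<otimes> y \<otimes> z) = x \<otimes> f (y \<otimes> z)" by simp
  qed
  have B: "f x = x \<otimes> f \<one>" if "x \<in> carrier G" for x
  proof -
    have "f x = f (x \<otimes> y \<otimes> inv y)" using that y by (simp add: m_assoc)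
    also have "\<dots> = x \<otimes> f (y \<otimes> inv y)" using A that y by simp
    finally show ?thesis using y by simp
  qed
  have "group (Gf G f)" by (rule Gf_group_trans[of "f \<one>", OF _ B]) (use fC in auto)
  with ng show False by simp
qed

end


context comm_group begin

lemma Gf_hom:
  assumes aC: "\<alpha> \<in> carrier G \<rightarrow> carrier G" and bC: "\<beta> \<in> carrier G \<rightarrow> carrier G"
    and am: "\<And>x y. x \<in> carrier G \<Longrightarrow> y \<in> carrier G \<Longrightarrow> \<alpha> (x \<otimes> y) = \<alpha> x \<otimes> \<alpha> y"
    and bm: "\<And>x y. x \<in> carrier G \<Longrightarrow> y \<in> carrier G \<Longrightarrow> \<beta> (x \<otimes> y) = \<alpha> x \<otimes> \<beta> y"
    and ff: "\<And>x y. x \<in> carrier G \<Longrightarrow> y \<in> carrier G \<Longrightarrow> \<alpha> (f1 (x \<otimes> y)) = f2 (\<beta> x \<otimes> \<beta> y)"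
  shows "case_sum (\<lambda>x. Inl (\<alpha> x)) (\<lambda>x. Inr (\<beta> x)) \<in> hom (Gf G f1) (Gf G f2)"
proof (rule homI)
  show "case_sum (\<lambda>x. Inl (\<alpha> x)) (\<lambda>x. Inr (\<beta> x)) u \<in> carrier (Gf G f2)"
    if "u \<in> carrier (Gf G f1)" for u
    using that aC bC by (cases rule: Gf_cases[OF that]) auto
  show "case_sum (\<lambda>x. Inl (\<alpha> x)) (\<lambda>x. Inr (\<beta> x)) (u \<otimes>\<^bsub>Gf G f1\<^esub> v) =
     case_sum (\<lambda>x. Inl (\<alpha> x)) (\<lambda>x. Inr (\<beta> x)) u \<otimes>\<^bsub>Gf G f2\<^esub> case_sum (\<lambda>x. Inl (\<alpha> x)) (\<lambda>x. Inr (\<beta> x)) v"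
    if "u \<in> carrier (Gf G f1)" "v \<in> carrier (Gf G f1)" for u v
  proof (cases rule: Gf_cases[OF that(1)]; cases rule: Gf_cases[OF that(2)])
    fix x y assume H: "x \<in> carrier G" "u = Inr x" "y \<in> carrier G" "v = Inl y"
    have "\<beta> (x \<otimes> y) = \<beta> x \<otimes> \<alpha> y"
    proof -
      have "\<beta> (x \<otimes> y) = \<beta> (y \<otimes> x)" using H by (simp add: m_comm)
      also have "\<dots> = \<alpha> y \<otimes> \<beta> x" using H by (simp add: bm)
      also have "\<dots> = \<beta> x \<otimes> \<alpha> y" using H aC bC by (intro m_comm) auto
      finally show ?thesis .
    qed
    then show ?thesis using H by simp
  qed (simp_all add: am bm ff)
qed

lemma Gf_bij:
  assumes "bij_betw \<alpha> (carrier G) (carrier G)" "bij_betw \<beta> (carrier G) (carrier G)"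
  shows "bij_betw (case_sum (\<lambda>x. Inl (\<alpha> x)) (\<lambda>x. Inr (\<beta> x))) (carrier (Gf G f1)) (carrier (Gf G f2))"
proof -
  have ia: "inj_on \<alpha> (carrier G)" and ib: "inj_on \<beta> (carrier G)"
    and sa: "\<alpha> ` carrier G = carrier G" and sb: "\<beta> ` carrier G = carrier G"
    using assms by (auto simp: bij_betw_def)
  have "inj_on (case_sum (\<lambda>x. Inl (\<alpha> x)) (\<lambda>x. Inr (\<beta> x))) (Inl ` carrier G \<union> Inr ` carrier G)"
    unfolding inj_on_def
  proof (intro ballI impI)
    fix u v assume "u \<in> Inl ` carrier G \<union> Inr ` carrier G" "v \<in> Inl ` carrier G \<union> Inr ` carrier G"
      "case_sum (\<lambda>x. Inl (\<alpha> x)) (\<lambda>x. Inr (\<beta> x)) u = case_sum (\<lambda>x. Inl (\<alpha> x)) (\<lambda>x. Inr (\<beta> x)) v"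
    then show "u = v" by (elim UnE imageE) (auto dest: inj_onD[OF ia] inj_onD[OF ib])
  qed
  moreover have "case_sum (\<lambda>x. Inl (\<alpha> x)) (\<lambda>x. Inr (\<beta> x)) ` (Inl ` carrier G \<union> Inr ` carrier G)
      = Inl ` (\<alpha> ` carrier G) \<union> Inr ` (\<beta> ` carrier G)"
    unfolding image_Un image_comp comp_def by simp
  ultimately show ?thesis using sa sb by (simp add: bij_betw_def Gf_carrier)
qed

end


context comm_group begin
lemma main_aux:
  assumes A2: "bij_betw f1 (carrier G) (carrier G)"
    and A3: "bij_betw f2 (carrier G) (carrier G)"
    and A4: "\<not> group (Gf G f1)"
    and A5: "\<not> group (Gf G f2)"
  shows "(conj_in_Aut G f1 f2 \<longrightarrow> Gf G f1 \<cong> Gf G f2)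
    \<and> (f1 \<one> = \<one> \<and> f2 \<one> = \<one> \<longrightarrow>
         (Gf G f1 \<cong> Gf G f2 \<longleftrightarrow> conj_in_Aut G f1 f2))
    \<and> (\<forall>t \<in> carrier G. f2 \<in> iso G G \<and> (\<exists>s \<in> carrier G. t = s \<otimes> s)
         \<and> (\<forall>x \<in> carrier G. f1 x = f2 x \<otimes> t) \<longrightarrow> Gf G f1 \<cong> Gf G f2)"
proof -
  have f1C: "f1 \<in> carrier G \<rightarrow> carrier G" using A2 by (rule bij_betw_imp_funcset)
  have f2C: "f2 \<in> carrier G \<rightarrow> carrier G" using A3 by (rule bij_betw_imp_funcset)
  have P1: "Gf G f1 \<cong> Gf G f2" if C: "conj_in_Aut G f1 f2"
  proof -
    obtain \<psi> where psi: "\<psi> \<in> iso G G"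
      and eq: "\<And>x. x \<in> carrier G \<Longrightarrow> f2 x = \<psi> (f1 (inv_into (carrier G) \<psi> x))"
      using C unfolding conj_in_Aut_def by blast
    have bij: "bij_betw \<psi> (carrier G) (carrier G)" and hm: "\<psi> \<in> hom G G"
      using psi by (auto simp: iso_def)
    have pC: "\<psi> \<in> carrier G \<rightarrow> carrier G" using hm by (simp add: hom_def)
    have pm: "\<And>x y. x \<in> carrier G \<Longrightarrow> y \<in> carrier G \<Longrightarrow> \<psi> (x \<otimes> y) = \<psi> x \<otimes> \<psi> y"
      using hm by (simp add: hom_def)
    have inj: "inj_on \<psi> (carrier G)" using bij by (simp add: bij_betw_def)
    have ff: "\<psi> (f1 (x \<otimes> y)) = f2 (\<psi> x \<otimes> \<psi> y)" if "x \<in> carrier G" "y \<in> carrier G" for x y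
    proof -
      have "f2 (\<psi> x \<otimes> \<psi> y) = f2 (\<psi> (x \<otimes> y))" using that pm by simp
      also have "\<dots> = \<psi> (f1 (inv_into (carrier G) \<psi> (\<psi> (x \<otimes> y))))"
        using that pC by (intro eq) auto
      also have "\<dots> = \<psi> (f1 (x \<otimes> y))" using that inj by (simp add: inv_into_f_f)
      finally show ?thesis by simp
    qed
    have "case_sum (\<lambda>x. Inl (\<psi> x)) (\<lambda>x. Inr (\<psi> x)) \<in> iso (Gf G f1) (Gf G f2)"
      unfolding iso_def using Gf_hom[of \<psi> \<psi> f1 f2, OF pC pC pm pm ff] Gf_bij[OF bij bij] by blast
    then show ?thesis unfolding is_iso_def by blast
  qed
  have P3: "Gf G f1 \<cong> Gf G f2"
    if t: "t \<in> carrier G" and f2i: "f2 \<in> iso G G" and s: "s \<in> carrier G" "t = s \<otimes> s"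
      and f1e: "\<And>x. x \<in> carrier G \<Longrightarrow> f1 x = f2 x \<otimes> t" for t s
  proof -
    have hm: "f2 \<in> hom G G" using f2i by (simp add: iso_def)
    have pm: "\<And>x y. x \<in> carrier G \<Longrightarrow> y \<in> carrier G \<Longrightarrow> f2 (x \<otimes> y) = f2 x \<otimes> f2 y"
      using hm by (simp add: hom_def)
    define c where "c = inv_into (carrier G) f2 s"
    have sim: "s \<in> f2 ` carrier G" using A3 s by (simp add: bij_betw_def)
    have c: "c \<in> carrier G" unfolding c_def using sim by (rule inv_into_into)
    have fc: "f2 c = s" unfolding c_def using sim by (rule f_inv_into_f)
    have idb: "bij_betw (\<lambda>x. x) (carrier G) (carrier G)" by (simp add: bij_betw_id[unfolded id_def])
    have bb: "bij_betw (\<lambda>x. x \<otimes> c) (carrier G) (carrier G)"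
    proof (rule bij_betwI[where g = "\<lambda>x. x \<otimes> inv c"])
      show "(\<lambda>x. x \<otimes> c) \<in> carrier G \<rightarrow> carrier G" using c by auto
      show "(\<lambda>x. x \<otimes> inv c) \<in> carrier G \<rightarrow> carrier G" using c by auto
      show "x \<otimes> c \<otimes> inv c = x" if "x \<in> carrier G" for x using that c by (simp add: m_assoc)
      show "y \<otimes> inv c \<otimes> c = y" if "y \<in> carrier G" for y using that c by (simp add: m_assoc)
    qed
    have ff: "f1 (x \<otimes> y) = f2 ((x \<otimes> c) \<otimes> (y \<otimes> c))" if "x \<in> carrier G" "y \<in> carrier G" for x y
    proof -
      have "(x \<otimes> c) \<otimes> (y \<otimes> c) = (x \<otimes> y) \<otimes> (c \<otimes> c)" using that c by (simp add: m_ac)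
      then have "f2 ((x \<otimes> c) \<otimes> (y \<otimes> c)) = f2 (x \<otimes> y) \<otimes> (s \<otimes> s)"
        using that c pm fc by simp
      then show ?thesis using f1e that s by simp
    qed
    have "case_sum (\<lambda>x. Inl x) (\<lambda>x. Inr (x \<otimes> c)) \<in> iso (Gf G f1) (Gf G f2)"
      unfolding iso_def
      using Gf_hom[of "\<lambda>x. x" "\<lambda>x. x \<otimes> c" f1 f2] Gf_bij[OF idb bb] ff c
      by (auto simp: m_assoc)
    then show ?thesis unfolding is_iso_def by blast
  qed
  have P2: "conj_in_Aut G f1 f2"
    if f11: "f1 \<one> = \<one>" and f21: "f2 \<one> = \<one>" and isoM: "Gf G f1 \<cong> Gf G f2"
  proof -
    obtain \<Phi> where Phi: "\<Phi> \<in> iso (Gf G f1) (Gf G f2)" using isoM unfolding is_iso_def by blast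
    have hm: "\<Phi> \<in> hom (Gf G f1) (Gf G f2)" and bj: "bij_betw \<Phi> (carrier (Gf G f1)) (carrier (Gf G f2))"
      using Phi by (auto simp: iso_def)
    have Pm: "\<And>u v. u \<in> carrier (Gf G f1) \<Longrightarrow> v \<in> carrier (Gf G f1) \<Longrightarrow>
        \<Phi> (u \<otimes>\<^bsub>Gf G f1\<^esub> v) = \<Phi> u \<otimes>\<^bsub>Gf G f2\<^esub> \<Phi> v"
      using hm by (simp add: hom_def)
    have PC: "\<And>u. u \<in> carrier (Gf G f1) \<Longrightarrow> \<Phi> u \<in> carrier (Gf G f2)"
      using hm by (auto simp: hom_def)
    have Pinj: "inj_on \<Phi> (carrier (Gf G f1))" using bj by (simp add: bij_betw_def)
    have Psurj: "\<exists>u \<in> carrier (Gf G f1). v = \<Phi> u" if "v \<in> carrier (Gf G f2)" for v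
      using bj that unfolding bij_betw_def by blast
    have cl1: "\<And>u v. u \<in> carrier (Gf G f1) \<Longrightarrow> v \<in> carrier (Gf G f1) \<Longrightarrow> u \<otimes>\<^bsub>Gf G f1\<^esub> v \<in> carrier (Gf G f1)"
      using Gf_closed[OF f1C] by blast
    have L: "\<exists>y\<in>carrier G. \<Phi> (Inl x) = Inl y" if x: "x \<in> carrier G" for x
    proof -
      have "\<Phi> (Inl x) \<in> carrier (Gf G f2)" using PC x by simp
      then show ?thesis
      proof (cases rule: Gf_cases)
        case (1 y) then show ?thesis by blast
      next
        case (2 y)
        obtain u w where u: "u \<in> carrier (Gf G f2)" and w: "w \<in> carrier (Gf G f2)" and
          ne: "(u \<otimes>\<^bsub>Gf G f2\<^esub> Inr y) \<otimes>\<^bsub>Gf G f2\<^esub> w \<noteq> u \<otimes>\<^bsub>Gf G f2\<^esub> (Inr y \<otimes>\<^bsub>Gf G f2\<^esub> w)"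
          using Inr_not_mid[OF A5 2(1) f2C] by blast
        obtain u' where u': "u' \<in> carrier (Gf G f1)" "u = \<Phi> u'" using Psurj[OF u] by blast
        obtain w' where w': "w' \<in> carrier (Gf G f1)" "w = \<Phi> w'" using Psurj[OF w] by blast
        have xi: "Inl x \<in> carrier (Gf G f1)" using x by simp
        have "(u \<otimes>\<^bsub>Gf G f2\<^esub> Inr y) \<otimes>\<^bsub>Gf G f2\<^esub> w = \<Phi> ((u' \<otimes>\<^bsub>Gf G f1\<^esub> Inl x) \<otimes>\<^bsub>Gf G f1\<^esub> w')"
          using u' w' xi 2 by (simp add: Pm cl1)
        also have "\<dots> = \<Phi> (u' \<otimes>\<^bsub>Gf G f1\<^esub> (Inl x \<otimes>\<^bsub>Gf G f1\<^esub> w'))"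
          using Inl_mid[OF u'(1) x w'(1)] by simp
        also have "\<dots> = u \<otimes>\<^bsub>Gf G f2\<^esub> (Inr y \<otimes>\<^bsub>Gf G f2\<^esub> w)"
          using u' w' xi 2 by (simp add: Pm cl1)
        finally show ?thesis using ne by blast
      qed
    qed
    have R: "\<exists>y\<in>carrier G. \<Phi> (Inr x) = Inr y" if x: "x \<in> carrier G" for x
    proof -
      have "\<Phi> (Inr x) \<in> carrier (Gf G f2)" using PC x by simp
      then show ?thesis
      proof (cases rule: Gf_cases)
        case (2 y) then show ?thesis by blast
      next
        case (1 y)
        obtain u w where u: "u \<in> carrier (Gf G f1)" and w: "w \<in> carrier (Gf G f1)" and
          ne: "(u \<otimes>\<^bsub>Gf G f1\<^esub> Inr x) \<otimes>\<^bsub>Gf G f1\<^esub> w \<noteq> u \<otimes>\<^bsub>Gf G f1\<^esub> (Inr x \<otimes>\<^bsub>Gf G f1\<^esub> w)"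
          using Inr_not_mid[OF A4 x f1C] by blast
        have xi: "Inr x \<in> carrier (Gf G f1)" using x by simp
        have "\<Phi> ((u \<otimes>\<^bsub>Gf G f1\<^esub> Inr x) \<otimes>\<^bsub>Gf G f1\<^esub> w) = (\<Phi> u \<otimes>\<^bsub>Gf G f2\<^esub> Inl y) \<otimes>\<^bsub>Gf G f2\<^esub> \<Phi> w"
          using u w xi 1 by (simp add: Pm cl1)
        also have "\<dots> = \<Phi> u \<otimes>\<^bsub>Gf G f2\<^esub> (Inl y \<otimes>\<^bsub>Gf G f2\<^esub> \<Phi> w)"
          using Inl_mid[OF PC[OF u] 1(1) PC[OF w]] by simp
        also have "\<dots> = \<Phi> (u \<otimes>\<^bsub>Gf G f1\<^esub> (Inr x \<otimes>\<^bsub>Gf G f1\<^esub> w))"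
          using u w xi 1 by (simp add: Pm cl1)
        finally have "(u \<otimes>\<^bsub>Gf G f1\<^esub> Inr x) \<otimes>\<^bsub>Gf G f1\<^esub> w = u \<otimes>\<^bsub>Gf G f1\<^esub> (Inr x \<otimes>\<^bsub>Gf G f1\<^esub> w)"
          using inj_onD[OF Pinj] u w xi cl1 by meson
        then show ?thesis using ne by blast
      qed
    qed
    define \<psi> where "\<psi> x = projl (\<Phi> (Inl x))" for x
    have psi: "\<Phi> (Inl x) = Inl (\<psi> x)" "\<psi> x \<in> carrier G" if "x \<in> carrier G" for x
      using L[OF that] unfolding \<psi>_def by auto
    define a where "a = projr (\<Phi> (Inr \<one>))"
    have a: "\<Phi> (Inr \<one>) = Inr a" "a \<in> carrier G" using R[of \<one>] unfolding a_def by auto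
    have pm: "\<psi> (x \<otimes> y) = \<psi> x \<otimes> \<psi> y" if "x \<in> carrier G" "y \<in> carrier G" for x y
    proof -
      have "Inl (\<psi> (x \<otimes> y)) = \<Phi> (Inl x \<otimes>\<^bsub>Gf G f1\<^esub> Inl y)" using that psi by simp
      also have "\<dots> = Inl (\<psi> x \<otimes> \<psi> y)" using that psi Pm[of "Inl x" "Inl y"] by simp
      finally show ?thesis by simp
    qed
    have Pr: "\<Phi> (Inr x) = Inr (\<psi> x \<otimes> a)" if "x \<in> carrier G" for x
    proof -
      have "\<Phi> (Inr x) = \<Phi> (Inl x \<otimes>\<^bsub>Gf G f1\<^esub> Inr \<one>)" using that by simp
      also have "\<dots> = Inr (\<psi> x \<otimes> a)" using that psi a Pm[of "Inl x" "Inr \<one>"] by simp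
      finally show ?thesis .
    qed
    have pC: "\<psi> \<in> carrier G \<rightarrow> carrier G" using psi by auto
    have phom: "\<psi> \<in> hom G G" using pC pm by (auto intro: homI)
    have pinj: "inj_on \<psi> (carrier G)"
    proof (rule inj_onI)
      fix x y assume "x \<in> carrier G" "y \<in> carrier G" "\<psi> x = \<psi> y"
      then have "\<Phi> (Inl x) = \<Phi> (Inl y)" using psi by simp
      then show "x = y" using inj_onD[OF Pinj] \<open>x \<in> carrier G\<close> \<open>y \<in> carrier G\<close> by fastforce
    qed
    have psurj: "\<psi> ` carrier G = carrier G"
    proof
      show "\<psi> ` carrier G \<subseteq> carrier G" using psi by auto
      show "carrier G \<subseteq> \<psi> ` carrier G"
      proof
        fix y assume y: "y \<in> carrier G"
        then obtain u where u: "u \<in> carrier (Gf G f1)" "Inl y = \<Phi> u" using Psurj[of "Inl y"] by auto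
        show "y \<in> \<psi> ` carrier G"
        proof (cases rule: Gf_cases[OF u(1)])
          case (1 x) then show ?thesis using u psi by force
        next
          case (2 x) then show ?thesis using u Pr by simp
        qed
      qed
    qed
    have piso: "\<psi> \<in> iso G G" using phom pinj psurj by (simp add: iso_def bij_betw_def)
    have p1: "\<psi> \<one> = \<one>" using hom_one[OF phom] by (simp add: is_group)
    have key: "\<psi> (f1 (x \<otimes> y)) = f2 ((\<psi> x \<otimes> a) \<otimes> (\<psi> y \<otimes> a))"
      if "x \<in> carrier G" "y \<in> carrier G" for x y
    proof -
      have "Inl (\<psi> (f1 (x \<otimes> y))) = \<Phi> (Inr x \<otimes>\<^bsub>Gf G f1\<^esub> Inr y)"
        using that psi[of "f1 (x \<otimes> y)"] f1C by (simp add: Pi_iff)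
      also have "\<dots> = Inl (f2 ((\<psi> x \<otimes> a) \<otimes> (\<psi> y \<otimes> a)))" using that Pr Pm[of "Inr x" "Inr y"] by simp
      finally show ?thesis by simp
    qed
    have aa: "a \<otimes> a = \<one>"
    proof -
      have "f2 (a \<otimes> a) = f2 \<one>" using key[of \<one> \<one>] p1 f11 f21 a by simp
      moreover have "inj_on f2 (carrier G)" using A3 by (simp add: bij_betw_def)
      ultimately show ?thesis using a by (meson inj_onD m_closed one_closed)
    qed
    have comm: "\<psi> (f1 x) = f2 (\<psi> x)" if "x \<in> carrier G" for x
    proof -
      have "(\<psi> x \<otimes> a) \<otimes> (\<psi> \<one> \<otimes> a) = \<psi> x \<otimes> (a \<otimes> a)" using that psi a p1 by (simp add: m_assoc)
      then show ?thesis using key[of x \<one>] that aa psi by simp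
    qed
    show ?thesis unfolding conj_in_Aut_def
    proof (intro bexI[OF _ piso] ballI)
      fix x assume x: "x \<in> carrier G"
      have "x \<in> \<psi> ` carrier G" using psurj x by simp
      then have z: "inv_into (carrier G) \<psi> x \<in> carrier G" "\<psi> (inv_into (carrier G) \<psi> x) = x"
        by (auto intro: inv_into_into f_inv_into_f)
      show "f2 x = \<psi> (f1 (inv_into (carrier G) \<psi> x))" using comm[OF z(1)] z(2) by simp
    qed
  qed
  show ?thesis using P1 P2 P3 by blast
qed

end

theorem corollary2p6:
  fixes G :: "('a, 'b) monoid_scheme" and f1 f2 :: "'a \<Rightarrow> 'a"
  assumes "comm_group G"
    and "bij_betw f1 (carrier G) (carrier G)"
    and "bij_betw f2 (carrier G) (carrier G)"
    and "\<not> group (Gf G f1)"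
    and "\<not> group (Gf G f2)"
  shows "(conj_in_Aut G f1 f2 \<longrightarrow> Gf G f1 \<cong> Gf G f2)
    \<and> (f1 \<one>\<^bsub>G\<^esub> = \<one>\<^bsub>G\<^esub> \<and> f2 \<one>\<^bsub>G\<^esub> = \<one>\<^bsub>G\<^esub> \<longrightarrow>
         (Gf G f1 \<cong> Gf G f2 \<longleftrightarrow> conj_in_Aut G f1 f2))
    \<and> (\<forall>t \<in> carrier G. f2 \<in> iso G G \<and> (\<exists>s \<in> carrier G. t = s \<otimes>\<^bsub>G\<^esub> s)
         \<and> (\<forall>x \<in> carrier G. f1 x = f2 x \<otimes>\<^bsub>G\<^esub> t) \<longrightarrow> Gf G f1 \<cong> Gf G f2)"
  using comm_group.main_aux[OF assms] .

end
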